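(* Let $F$ be any one of the functions $H_{\mathrm{pen}}$, $V_{\mathrm{pen}}$, $W_{\mathrm{pen}}$, $U$ on $\Lambda^M$ defined below (for a fixed realization of $\mathbf y$). Then $F$ is convex and differentiable, and for all $\boldsymbol\theta,\boldsymbol\theta_0\in\Lambda^M$, \[F(\boldsymbol\theta)=F(\boldsymbol\theta_0)+\nabla F(\boldsymbol\theta_0)^T(\boldsymbol\theta-\boldsymbol\theta_0)+\tfrac12\|\hat{\boldsymbol\mu}_{\boldsymbol\theta}-\hat{\boldsymbol\mu}_{\boldsymbol\theta_0}\|_2^2.\] Furthermore, if $\hat{\boldsymbol\theta}$ is a minimizer of $F$ over $\Lambda^M$, then for all $\boldsymbol\theta\in\Lambda^M$, $F(\boldsymbol\theta)\ge F(\hat{\boldsymbol\theta})+\tfrac12\|\hat{\boldsymbol\mu}_{\boldsymbol\theta}-\hat{\boldsymbol\mu}_{\hat{\boldsymbol\theta}}\|_2^2$.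
   Context: Data $\mathbf y\in\mathbf R^n$; for $j=1,\dots,M$, $\hat{\boldsymbol\mu}_j=A_j\mathbf y+\mathbf b_j$ with $n\times n$ matrices $A_j$ and $\mathbf b_j\in\mathbf R^n$. $\Lambda^M=\{\boldsymbol\theta\in\mathbf R^M:\sum_j\theta_j=1,\theta_j\ge0\}$; $A_{\boldsymbol\theta}=\sum_j\theta_jA_j$, $\mathbf b_{\boldsymbol\theta}=\sum_j\theta_j\mathbf b_j$, $\hat{\boldsymbol\mu}_{\boldsymbol\theta}=A_{\boldsymbol\theta}\mathbf y+\mathbf b_{\boldsymbol\theta}$. $\mathrm{pen}(\boldsymbol\theta)=\sum_j\theta_j\|\hat{\boldsymbol\mu}_{\boldsymbol\theta}-\hat{\boldsymbol\mu}_j\|_2^2$. With $\sigma^2>0$, $\hat\sigma^2\in\mathbf R$, $\hat K^2\ge0$ and $\boldsymbol\pi\in\Lambda^M$ with positive entries: $H_{\mathrm{pen}}(\boldsymbol\theta)=\|\hat{\boldsymbol\mu}_{\boldsymbol\theta}\|_2^2-2\mathbf y^T\hat{\boldsymbol\mu}_{\boldsymbol\theta}+2\sigma^2\mathrm{Tr}(A_{\boldsymbol\theta})+\frac12\mathrm{pen}(\boldsymbol\theta)$; $V_{\mathrm{pen}}(\boldsymbol\theta)=H_{\mathrm{pen}}(\boldsymbol\theta)+46\sigma^2\sum_j\theta_j\log(1/\pi_j)$; $W_{\mathrm{pen}}(\boldsymbol\theta)=\|\hat{\boldsymbol\mu}_{\boldsymbol\theta}\|_2^2-2\mathbf y^T\hat{\boldsymbol\mu}_{\boldsymbol\theta}+2\hat\sigma^2\mathrm{Tr}(A_{\boldsymbol\theta})+\frac12\mathrm{pen}(\boldsymbol\theta)$;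 $U(\boldsymbol\theta)=\|\hat{\boldsymbol\mu}_{\boldsymbol\theta}\|_2^2-2\mathbf y^T\hat{\boldsymbol\mu}_{\boldsymbol\theta}+\frac12\mathrm{pen}(\boldsymbol\theta)+32\hat K^2\sum_j\theta_j\log(1/\pi_j)$. These functions are polynomials in $\boldsymbol\theta\in\mathbf R^M$, and $\nabla F$ is their gradient. *)

theory Defs
  imports "HOL-Analysis.Analysis"
begin

text \<open>Index type 'm stands for {1..M}, index type 'n for {1..n}.
  Estimators: mu_j = A_j y + b_j.\<close>

definition LambdaM :: "(real^'m) set" where
  "LambdaM = {\<theta>. sum (\<lambda>j. \<theta>$j) UNIV = 1 \<and> (\<forall>j. \<theta>$j \<ge> 0)}"

definition Amix :: "('m \<Rightarrow> real^'n^'n) \<Rightarrow> real^'m \<Rightarrow> real^'n^'n" where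
  "Amix A \<theta> = (\<Sum>j\<in>UNIV. \<theta>$j *\<^sub>R A j)"

definition bmix :: "('m \<Rightarrow> real^'n) \<Rightarrow> real^'m \<Rightarrow> real^'n" where
  "bmix b \<theta> = (\<Sum>j\<in>UNIV. \<theta>$j *\<^sub>R b j)"

definition muj :: "('m \<Rightarrow> real^'n^'n) \<Rightarrow> ('m \<Rightarrow> real^'n) \<Rightarrow> real^'n \<Rightarrow> 'm \<Rightarrow> real^'n" where
  "muj A b y j = A j *v y + b j"

definition mutheta :: "('m \<Rightarrow> real^'n^'n) \<Rightarrow> ('m \<Rightarrow> real^'n) \<Rightarrow> real^'n \<Rightarrow> real^'m \<Rightarrow> real^'n" where
  "mutheta A b y \<theta> = Amix A \<theta> *v y + bmix b \<theta>"

definition pen :: "('m \<Rightarrow> real^'n^'n) \<Rightarrow> ('m \<Rightarrow> real^'n) \<Rightarrow> real^'n \<Rightarrow> real^'m \<Rightarrow> real" where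
  "pen A b y \<theta> = (\<Sum>j\<in>UNIV. \<theta>$j * (norm (mutheta A b y \<theta> - muj A b y j))\<^sup>2)"

definition Hpen :: "('m \<Rightarrow> real^'n^'n) \<Rightarrow> ('m \<Rightarrow> real^'n) \<Rightarrow> real^'n \<Rightarrow> real \<Rightarrow> real^'m \<Rightarrow> real" where
  "Hpen A b y sigma2 \<theta> = (norm (mutheta A b y \<theta>))\<^sup>2 - 2 * (y \<bullet> mutheta A b y \<theta>)
     + 2 * sigma2 * trace (Amix A \<theta>) + pen A b y \<theta> / 2"

definition Vpen :: "('m \<Rightarrow> real^'n^'n) \<Rightarrow> ('m \<Rightarrow> real^'n) \<Rightarrow> real^'n \<Rightarrow> real \<Rightarrow> real^'m \<Rightarrow> real^'m \<Rightarrow> real" where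
  "Vpen A b y sigma2 \<pi> \<theta> = Hpen A b y sigma2 \<theta> + 46 * sigma2 * (\<Sum>j\<in>UNIV. \<theta>$j * ln (1 / \<pi>$j))"

definition Wpen :: "('m \<Rightarrow> real^'n^'n) \<Rightarrow> ('m \<Rightarrow> real^'n) \<Rightarrow> real^'n \<Rightarrow> real \<Rightarrow> real^'m \<Rightarrow> real" where
  "Wpen A b y sigmahat2 \<theta> = (norm (mutheta A b y \<theta>))\<^sup>2 - 2 * (y \<bullet> mutheta A b y \<theta>)
     + 2 * sigmahat2 * trace (Amix A \<theta>) + pen A b y \<theta> / 2"

definition Ufun :: "('m \<Rightarrow> real^'n^'n) \<Rightarrow> ('m \<Rightarrow> real^'n) \<Rightarrow> real^'n \<Rightarrow> real \<Rightarrow> real^'m \<Rightarrow> real^'m \<Rightarrow> real" where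
  "Ufun A b y Khat2 \<pi> \<theta> = (norm (mutheta A b y \<theta>))\<^sup>2 - 2 * (y \<bullet> mutheta A b y \<theta>)
     + pen A b y \<theta> / 2 + 32 * Khat2 * (\<Sum>j\<in>UNIV. \<theta>$j * ln (1 / \<pi>$j))"

end

theory Submission imports Defs begin

lemma convex_LambdaM: "convex (LambdaM :: (real^'m::finite) set)"
  unfolding convex_def LambdaM_def
  by (auto simp: sum.distrib sum_distrib_left[symmetric])

context
  fixes \<mu> :: "'m::finite \<Rightarrow> real^'n::finite" and c :: "'m \<Rightarrow> real"
begin

definition mm :: "real^'m \<Rightarrow> real^'n" where "mm \<theta> = (\<Sum>j\<in>UNIV. \<theta>$j *\<^sub>R \<mu> j)"

lemma mm_diff: "mm (x - y) = mm x - mm y"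
  by (simp add: mm_def scaleR_diff_left sum_subtractf)
lemma mm_add: "mm (x + y) = mm x + mm y"
  by (simp add: mm_def scaleR_add_left sum.distrib)
lemma mm_scale: "mm (t *\<^sub>R x) = t *\<^sub>R mm x"
  by (simp add: mm_def scaleR_sum_right)
lemma linear_mm: "linear mm"
  by (rule linearI) (simp_all add: mm_add mm_scale)

definition Dexp :: "real^'m \<Rightarrow> real^'m \<Rightarrow> real" where
  "Dexp \<theta>0 h = (\<Sum>j\<in>UNIV. h$j) * (norm (mm \<theta>0))\<^sup>2 / 2
     + (\<Sum>j\<in>UNIV. \<theta>0$j) * (mm \<theta>0 \<bullet> mm h) + (\<Sum>j\<in>UNIV. h$j * c j)"

definition Fg :: "real^'m \<Rightarrow> real" where
  "Fg \<theta> = (\<Sum>j\<in>UNIV. \<theta>$j) * (norm (mm \<theta>))\<^sup>2 / 2 + (\<Sum>j\<in>UNIV. \<theta>$j * c j)"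

lemma Fg_deriv: "(Fg has_derivative Dexp \<theta>0) (at \<theta>0)"
proof -
  have bS: "bounded_linear (\<lambda>\<theta>::real^'m. \<Sum>j\<in>UNIV. \<theta>$j)"
    by (rule linear_conv_bounded_linear[THEN iffD1]) (rule linearI, simp_all add: sum.distrib sum_distrib_left)
  have bL: "bounded_linear (\<lambda>\<theta>::real^'m. \<Sum>j\<in>UNIV. \<theta>$j * c j)"
    by (rule linear_conv_bounded_linear[THEN iffD1]) (rule linearI, simp_all add: sum.distrib sum_distrib_left distrib_right mult.assoc)
  have bm: "bounded_linear mm" using linear_mm linear_conv_bounded_linear by blast
  have d1: "((\<lambda>\<theta>. \<Sum>j\<in>UNIV. \<theta>$j) has_derivative (\<lambda>\<theta>. \<Sum>j\<in>UNIV. \<theta>$j)) (at \<theta>0)"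
    using bS bounded_linear.has_derivative[OF bS has_derivative_ident] by simp
  have d2: "((\<lambda>\<theta>. \<Sum>j\<in>UNIV. \<theta>$j * c j) has_derivative (\<lambda>\<theta>. \<Sum>j\<in>UNIV. \<theta>$j * c j)) (at \<theta>0)"
    using bounded_linear.has_derivative[OF bL has_derivative_ident] by simp
  have d3: "(mm has_derivative mm) (at \<theta>0)"
    using bounded_linear.has_derivative[OF bm has_derivative_ident] by simp
  have d4: "((\<lambda>\<theta>. mm \<theta> \<bullet> mm \<theta>) has_derivative (\<lambda>h. mm \<theta>0 \<bullet> mm h + mm h \<bullet> mm \<theta>0)) (at \<theta>0)"
    using has_derivative_inner[OF d3 d3] by simp
  have d5: "((\<lambda>\<theta>. (\<Sum>j\<in>UNIV. \<theta>$j) * (mm \<theta> \<bullet> mm \<theta>)) has_derivative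
     (\<lambda>h. (\<Sum>j\<in>UNIV. \<theta>0$j) * (mm \<theta>0 \<bullet> mm h + mm h \<bullet> mm \<theta>0) + (\<Sum>j\<in>UNIV. h$j) * (mm \<theta>0 \<bullet> mm \<theta>0))) (at \<theta>0)"
    using has_derivative_mult[OF d1 d4] by simp
  have d6: "((\<lambda>\<theta>. (\<Sum>j\<in>UNIV. \<theta>$j) * (mm \<theta> \<bullet> mm \<theta>) / 2 + (\<Sum>j\<in>UNIV. \<theta>$j * c j)) has_derivative
     (\<lambda>h. ((\<Sum>j\<in>UNIV. \<theta>0$j) * (mm \<theta>0 \<bullet> mm h + mm h \<bullet> mm \<theta>0) + (\<Sum>j\<in>UNIV. h$j) * (mm \<theta>0 \<bullet> mm \<theta>0)) / 2
         + (\<Sum>j\<in>UNIV. h$j * c j))) (at \<theta>0)"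
    by (intro has_derivative_add d2 bounded_linear.has_derivative[OF bounded_linear_divide d5])
  have e1: "Fg = (\<lambda>\<theta>. (\<Sum>j\<in>UNIV. \<theta>$j) * (mm \<theta> \<bullet> mm \<theta>) / 2 + (\<Sum>j\<in>UNIV. \<theta>$j * c j))"
    by (auto simp: Fg_def power2_norm_eq_inner)
  have e2: "Dexp \<theta>0 = (\<lambda>h. ((\<Sum>j\<in>UNIV. \<theta>0$j) * (mm \<theta>0 \<bullet> mm h + mm h \<bullet> mm \<theta>0) + (\<Sum>j\<in>UNIV. h$j) * (mm \<theta>0 \<bullet> mm \<theta>0)) / 2
         + (\<Sum>j\<in>UNIV. h$j * c j))"
    by (auto simp: Dexp_def power2_norm_eq_inner inner_commute algebra_simps)
  show ?thesis using d6 e1 e2 by simp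
qed


lemma L_diff: "(\<Sum>j\<in>UNIV. (x - y)$j * c j) = (\<Sum>j\<in>UNIV. x$j * c j) - (\<Sum>j\<in>UNIV. y$j * c j)"
  by (simp add: left_diff_distrib sum_subtractf)

lemma S_Lambda: "\<theta> \<in> LambdaM \<Longrightarrow> (\<Sum>j\<in>UNIV. \<theta>$j) = 1"
  by (simp add: LambdaM_def)

lemma norm_sq_expand: "(norm (a + d))\<^sup>2 = (norm (a::real^'n))\<^sup>2 + 2 * (a \<bullet> d) + (norm d)\<^sup>2"
  by (simp add: power2_norm_eq_inner inner_add inner_commute)

lemma Fg_identity:
  assumes "\<theta> \<in> LambdaM" "\<theta>0 \<in> LambdaM"
  shows "Fg \<theta> = Fg \<theta>0 + Dexp \<theta>0 (\<theta> - \<theta>0) + (norm (mm \<theta> - mm \<theta>0))\<^sup>2 / 2"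
proof -
  have s1: "(\<Sum>j\<in>UNIV. \<theta>$j) = 1" "(\<Sum>j\<in>UNIV. \<theta>0$j) = 1" using assms S_Lambda by auto
  have s0: "(\<Sum>j\<in>UNIV. (\<theta> - \<theta>0)$j) = 0" using s1 by (simp add: sum_subtractf)
  define a where "a = mm \<theta>0"
  define d where "d = mm \<theta> - mm \<theta>0"
  have m: "mm \<theta> = a + d" by (simp add: a_def d_def)
  have md: "mm (\<theta> - \<theta>0) = d" by (simp add: d_def mm_diff)
  show ?thesis
    unfolding Fg_def Dexp_def s1 s0 L_diff md
    by (simp add: m norm_sq_expand flip: a_def d_def)
qed

lemma norm_sq_convex:
  "(norm ((1 - t) *\<^sub>R a + t *\<^sub>R b))\<^sup>2 = (1 - t) * (norm (a::real^'n))\<^sup>2 + t * (norm b)\<^sup>2 - t * (1 - t) * (norm (a - b))\<^sup>2"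
  by (simp add: power2_norm_eq_inner inner_add inner_diff inner_commute algebra_simps)

lemma Fg_convex: "convex_on LambdaM Fg"
proof (rule convex_onI[OF _ convex_LambdaM])
  fix t :: real and x y :: "real^'m"
  assume t: "0 < t" "t < 1" and xy: "x \<in> LambdaM" "y \<in> LambdaM"
  have z: "(1 - t) *\<^sub>R x + t *\<^sub>R y \<in> LambdaM"
    using convex_LambdaM xy t unfolding convex_def by (metis diff_add_cancel add.commute less_eq_real_def diff_ge_0_iff_ge)
  have S: "\<And>w. w \<in> LambdaM \<Longrightarrow> Fg w = (norm (mm w))\<^sup>2 / 2 + (\<Sum>j\<in>UNIV. w$j * c j)"
    by (simp add: Fg_def S_Lambda)
  have L: "(\<Sum>j\<in>UNIV. ((1 - t) *\<^sub>R x + t *\<^sub>R y)$j * c j) = (1 - t) * (\<Sum>j\<in>UNIV. x$j * c j) + t * (\<Sum>j\<in>UNIV. y$j * c j)"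
    by (simp add: algebra_simps sum.distrib sum_distrib_left sum_subtractf)
  have "0 \<le> t * (1 - t) * (norm (mm x - mm y))\<^sup>2" using t by simp
  then show "Fg ((1 - t) *\<^sub>R x + t *\<^sub>R y) \<le> (1 - t) * Fg x + t * Fg y"
    unfolding S[OF z] S[OF xy(1)] S[OF xy(2)] L mm_add mm_scale norm_sq_convex
    by (simp add: algebra_simps divide_simps)
qed

lemma Fg_min:
  assumes th: "\<theta>h \<in> LambdaM" and mn: "\<forall>\<theta>\<in>LambdaM. Fg \<theta>h \<le> Fg \<theta>" and x: "\<theta> \<in> LambdaM"
  shows "Fg \<theta> \<ge> Fg \<theta>h + (norm (mm \<theta> - mm \<theta>h))\<^sup>2 / 2"
proof -
  define h where "h = \<theta> - \<theta>h"
  define D where "D = Dexp \<theta>h h"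
  define C where "C = (norm (mm h))\<^sup>2 / 2"
  have lin: "linear (Dexp \<theta>h)" using Fg_deriv has_derivative_linear by blast
  have C0: "C \<ge> 0" by (simp add: C_def)
  have key: "D + t * C \<ge> 0" if t: "0 < t" "t \<le> 1" for t
  proof -
    have zt: "\<theta>h + t *\<^sub>R h \<in> LambdaM"
    proof -
      have "(1 - t) *\<^sub>R \<theta>h + t *\<^sub>R \<theta> \<in> LambdaM"
        using convex_LambdaM th x t unfolding convex_def by auto
      moreover have "(1 - t) *\<^sub>R \<theta>h + t *\<^sub>R \<theta> = \<theta>h + t *\<^sub>R h" by (simp add: h_def algebra_simps)
      ultimately show ?thesis by simp
    qed
    have "Fg (\<theta>h + t *\<^sub>R h) = Fg \<theta>h + Dexp \<theta>h (t *\<^sub>R h) + (norm (mm (t *\<^sub>R h)))\<^sup>2 / 2"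
      using Fg_identity[OF zt th] by (simp add: mm_add)
    also have "\<dots> = Fg \<theta>h + t * D + t\<^sup>2 * C"
      using linear_scale[OF lin] by (simp add: D_def C_def mm_scale power_mult_distrib)
    finally have "t * D + t\<^sup>2 * C \<ge> 0" using mn zt by fastforce
    then have "t * (D + t * C) \<ge> 0" by (simp add: algebra_simps power2_eq_square)
    then show ?thesis using t by (simp add: zero_le_mult_iff)
  qed
  have D0: "D \<ge> 0"
  proof (rule ccontr)
    assume "\<not> D \<ge> 0"
    then have Dn: "D < 0" by simp
    define t where "t = - D / (C - D)"
    have "0 < t" "t \<le> 1" using Dn C0 by (auto simp: t_def field_simps)
    from key[OF this] have "D + t * C \<ge> 0" .
    moreover have "D + t * C = - D\<^sup>2 / (C - D)" using Dn C0 by (simp add: t_def field_simps power2_eq_square)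
    moreover have "- D\<^sup>2 / (C - D) < 0" using Dn C0 by (simp add: divide_neg_pos)
    ultimately show False by simp
  qed
  show ?thesis using Fg_identity[OF x th] D0 by (simp add: D_def h_def)
qed

end

lemma mutheta_mm: "mutheta A b y \<theta> = mm (muj A b y) \<theta>"
proof -
  have "Amix A \<theta> *v y = (\<Sum>j\<in>UNIV. \<theta>$j *\<^sub>R (A j *v y))"
    by (simp add: vec_eq_iff Amix_def matrix_vector_mult_def sum_component sum_distrib_left
        sum_distrib_right mult.assoc) (subst sum.swap, simp)
  then show ?thesis
    by (simp add: mutheta_def mm_def muj_def bmix_def scaleR_add_right sum.distrib)
qed

lemma trace_Amix: "trace (Amix A \<theta>) = (\<Sum>j\<in>UNIV. \<theta>$j * trace (A j))"
  by (simp add: trace_def Amix_def sum_component sum_distrib_left) (rule sum.swap)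

lemma G_form:
  "(norm (mutheta A b y \<theta>))\<^sup>2 - 2 * (y \<bullet> mutheta A b y \<theta>) + pen A b y \<theta> / 2
   = (\<Sum>j\<in>UNIV. \<theta>$j) * (norm (mutheta A b y \<theta>))\<^sup>2 / 2
     + (\<Sum>j\<in>UNIV. \<theta>$j * ((norm (muj A b y j))\<^sup>2 / 2 - 2 * (y \<bullet> muj A b y j)))"
proof -
  define m where "m = mutheta A b y \<theta>"
  define \<mu> where "\<mu> = muj A b y"
  have m: "m = (\<Sum>j\<in>UNIV. \<theta>$j *\<^sub>R \<mu> j)" by (simp add: m_def \<mu>_def mutheta_mm mm_def)
  have ym: "y \<bullet> m = (\<Sum>j\<in>UNIV. \<theta>$j * (y \<bullet> \<mu> j))" by (simp add: m inner_sum_right)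
  have mm: "m \<bullet> m = (\<Sum>j\<in>UNIV. \<theta>$j * (m \<bullet> \<mu> j))" by (subst (2) m) (simp add: inner_sum_right)
  have "pen A b y \<theta> = (\<Sum>j\<in>UNIV. \<theta>$j * ((norm m)\<^sup>2 - 2 * (m \<bullet> \<mu> j) + (norm (\<mu> j))\<^sup>2))"
    by (simp add: pen_def m_def[symmetric] \<mu>_def[symmetric] power2_norm_eq_inner inner_diff inner_commute) (simp add: algebra_simps)
  also have "\<dots> = (\<Sum>j\<in>UNIV. \<theta>$j) * (norm m)\<^sup>2 - 2 * (m \<bullet> m) + (\<Sum>j\<in>UNIV. \<theta>$j * (norm (\<mu> j))\<^sup>2)"
    by (simp add: mm algebra_simps sum.distrib sum_subtractf sum_distrib_left sum_distrib_right)
  finally have p: "pen A b y \<theta> = \<dots>" .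
  show ?thesis
    unfolding m_def[symmetric] \<mu>_def[symmetric] p
    by (simp add: ym algebra_simps sum.distrib sum_subtractf sum_distrib_left sum_distrib_right
       power2_norm_eq_inner add_divide_distrib diff_divide_distrib)
qed


lemma F_form:
  assumes "F \<in> {Hpen A b y sigma2, Vpen A b y sigma2 \<pi>, Wpen A b y sigmahat2, Ufun A b y Khat2 \<pi>}"
  shows "\<exists>c. F = Fg (muj A b y) c"
proof -
  define g where "g j = (norm (muj A b y j))\<^sup>2 / 2 - 2 * (y \<bullet> muj A b y j)" for j
  have G: "\<And>\<theta>. (norm (mutheta A b y \<theta>))\<^sup>2 - 2 * (y \<bullet> mutheta A b y \<theta>) + pen A b y \<theta> / 2
     = Fg (muj A b y) g \<theta>"
    by (simp add: Fg_def g_def G_form flip: mutheta_mm)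
  have Fgl: "\<And>\<theta> c d. Fg (muj A b y) c \<theta> + (\<Sum>j\<in>UNIV. \<theta>$j * d j) = Fg (muj A b y) (\<lambda>j. c j + d j) \<theta>"
    by (simp add: Fg_def algebra_simps sum.distrib)
  have H: "Hpen A b y s = Fg (muj A b y) (\<lambda>j. g j + 2 * s * trace (A j))" for s
  proof
    fix \<theta>
    have "Hpen A b y s \<theta> = Fg (muj A b y) g \<theta> + (\<Sum>j\<in>UNIV. \<theta>$j * (2 * s * trace (A j)))"
      by (simp add: Hpen_def G[symmetric] trace_Amix sum_distrib_left algebra_simps)
    then show "Hpen A b y s \<theta> = Fg (muj A b y) (\<lambda>j. g j + 2 * s * trace (A j)) \<theta>" by (simp add: Fgl)
  qed
  have V: "Vpen A b y sigma2 \<pi> = Fg (muj A b y) (\<lambda>j. (g j + 2 * sigma2 * trace (A j)) + 46 * sigma2 * ln (1 / \<pi>$j))"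
  proof
    fix \<theta>
    have "Vpen A b y sigma2 \<pi> \<theta> = Fg (muj A b y) (\<lambda>j. g j + 2 * sigma2 * trace (A j)) \<theta>
       + (\<Sum>j\<in>UNIV. \<theta>$j * (46 * sigma2 * ln (1 / \<pi>$j)))"
      by (simp add: Vpen_def H sum_distrib_left algebra_simps)
    then show "Vpen A b y sigma2 \<pi> \<theta> = Fg (muj A b y) (\<lambda>j. (g j + 2 * sigma2 * trace (A j)) + 46 * sigma2 * ln (1 / \<pi>$j)) \<theta>"
      by (simp only: Fgl)
  qed
  have W: "Wpen A b y sigmahat2 = Hpen A b y sigmahat2"
    by (simp add: fun_eq_iff Wpen_def Hpen_def)
  have U: "Ufun A b y Khat2 \<pi> = Fg (muj A b y) (\<lambda>j. g j + 32 * Khat2 * ln (1 / \<pi>$j))"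
  proof
    fix \<theta>
    have "Ufun A b y Khat2 \<pi> \<theta> = Fg (muj A b y) g \<theta> + (\<Sum>j\<in>UNIV. \<theta>$j * (32 * Khat2 * ln (1 / \<pi>$j)))"
      by (simp add: Ufun_def G[symmetric] sum_distrib_left algebra_simps)
    then show "Ufun A b y Khat2 \<pi> \<theta> = Fg (muj A b y) (\<lambda>j. g j + 32 * Khat2 * ln (1 / \<pi>$j)) \<theta>"
      by (simp only: Fgl)
  qed
  show ?thesis using assms H[of sigma2] H[of sigmahat2] V W U by auto
qed

theorem lemma8p1:
  fixes A :: "'m::finite \<Rightarrow> real^'n::finite^'n"
    and b :: "'m \<Rightarrow> real^'n"
    and y :: "real^'n"
    and sigma2 sigmahat2 Khat2 :: real
    and \<pi> :: "real^'m"
    and F :: "real^'m \<Rightarrow> real"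
  assumes sigma2_pos: "sigma2 > 0"
    and Khat2_nonneg: "Khat2 \<ge> 0"
    and pi_simplex: "\<pi> \<in> LambdaM"
    and pi_pos: "\<forall>j. \<pi>$j > 0"
    and F_choice: "F \<in> {Hpen A b y sigma2, Vpen A b y sigma2 \<pi>, Wpen A b y sigmahat2, Ufun A b y Khat2 \<pi>}"
  shows "convex_on LambdaM F
    \<and> (\<forall>\<theta>0. F differentiable (at \<theta>0))
    \<and> (\<forall>\<theta>\<in>LambdaM. \<forall>\<theta>0\<in>LambdaM.
          F \<theta> = F \<theta>0 + frechet_derivative F (at \<theta>0) (\<theta> - \<theta>0)
                 + (norm (mutheta A b y \<theta> - mutheta A b y \<theta>0))\<^sup>2 / 2)
    \<and> (\<forall>\<theta>hat\<in>LambdaM. (\<forall>\<theta>\<in>LambdaM. F \<theta>hat \<le> F \<theta>) \<longrightarrow>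
          (\<forall>\<theta>\<in>LambdaM. F \<theta> \<ge> F \<theta>hat + (norm (mutheta A b y \<theta> - mutheta A b y \<theta>hat))\<^sup>2 / 2))"
proof -
  obtain c where Fc: "F = Fg (muj A b y) c" using F_form[OF F_choice] by blast
  have fd: "frechet_derivative F (at \<theta>0) = Dexp (muj A b y) c \<theta>0" for \<theta>0
    using Fc frechet_derivative_at[OF Fg_deriv[of "muj A b y" c \<theta>0]] by simp
  have mt: "\<And>\<theta>. mutheta A b y \<theta> = mm (muj A b y) \<theta>" by (rule mutheta_mm)
  show ?thesis
    unfolding fd mt
    using Fg_convex Fg_identity Fg_min Fg_deriv Fc
    by (auto simp: differentiable_def intro!: exI[of _ "Dexp (muj A b y) c _"])
qed
end
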